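(* Let $T\in\mathbb{R}^{n\times n}$ be skew-symmetric, $S\in\mathbb{R}^{k\times k}$ skew-symmetric and $\Lambda\in\mathbb{R}^{k\times k}$ symmetric, all fixed. For $U\in\mathbb{R}^{n\times k}_{\ge 0}$ put $Q=T^{\top}US$, $P=S^{\top}U^{\top}US$ and $$F(U)=\mathrm{tr}\big(-2U^{\top}T^{\top}US+US^{\top}U^{\top}USU^{\top}+U\Lambda U^{\top}\big).$$ Assume $P_{+}+\Lambda\ge 0$ entrywise. For $U\ge 0$ and $U'$ with strictly positive entries define $$Z(U,U')=\mathrm{tr}\big(-2Q_{+}U^{\top}-UP_{-}U^{\top}\big)+\sum_{i,j}\left(\frac{[U'(P_{+}+\Lambda)]_{ij}U_{ij}^2}{U'_{ij}}+2[Q_{-}]_{ij}\frac{U_{ij}^2+U_{ij}'^2}{2U'_{ij}}\right),$$ with $Q,P$ computed from $U$. Then $Z$ is an auxiliary function of $F$, i.e. $Z(U,U')\ge F(U)$ for all such $U,U'$, and $Z(U,U)=F(U)$.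
   Context: For a real matrix $X$, $X_{+}$ and $X_{-}$ denote its positive and negative parts: $X_{+}=\max(X,0)$, $X_{-}=\max(-X,0)$ entrywise, so $X=X_{+}-X_{-}$ with $X_{\pm}\ge 0$. *)

theory Defs
  imports "HOL-Analysis.Analysis"
begin

definition pos_part_mat :: "real^'c^'r \<Rightarrow> real^'c^'r" where
  "pos_part_mat X = (\<chi> i j. max (X$i$j) 0)"

definition neg_part_mat :: "real^'c^'r \<Rightarrow> real^'c^'r" where
  "neg_part_mat X = (\<chi> i j. max (- (X$i$j)) 0)"

definition nonneg_mat :: "real^'c^'r \<Rightarrow> bool" where
  "nonneg_mat X \<longleftrightarrow> (\<forall>i j. X$i$j \<ge> 0)"

definition pos_mat :: "real^'c^'r \<Rightarrow> bool" where
  "pos_mat X \<longleftrightarrow> (\<forall>i j. X$i$j > 0)"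

definition Qm :: "real^'n^'n \<Rightarrow> real^'k^'k \<Rightarrow> real^'k^'n \<Rightarrow> real^'k^'n" where
  "Qm T S U = transpose T ** U ** S"

definition Pm :: "real^'k^'k \<Rightarrow> real^'k^'n \<Rightarrow> real^'k^'k" where
  "Pm S U = transpose S ** transpose U ** U ** S"

definition Fobj :: "real^'n^'n \<Rightarrow> real^'k^'k \<Rightarrow> real^'k^'k \<Rightarrow> real^'k^'n \<Rightarrow> real" where
  "Fobj T S \<Lambda> U = - 2 * trace (transpose U ** transpose T ** U ** S)
      + trace (U ** transpose S ** transpose U ** U ** S ** transpose U)
      + trace (U ** \<Lambda> ** transpose U)"

definition Zaux :: "real^'n^'n \<Rightarrow> real^'k^'k \<Rightarrow> real^'k^'k \<Rightarrow> real^'k^'n \<Rightarrow> real^'k^'n \<Rightarrow> real" where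
  "Zaux T S \<Lambda> U U' =
    (let Q = Qm T S U; P = Pm S U;
         M = U' ** (pos_part_mat P + \<Lambda>) in
     (- 2 * trace (pos_part_mat Q ** transpose U) - trace (U ** neg_part_mat P ** transpose U))
     + (\<Sum>i\<in>UNIV. \<Sum>j\<in>UNIV.
          M$i$j * (U$i$j)^2 / U'$i$j
          + 2 * (neg_part_mat Q)$i$j * ((U$i$j)^2 + (U'$i$j)^2) / (2 * U'$i$j)))"

end

theory Submission
  imports Defs
begin

lemma trace_tY_X:
  fixes X Y :: "real^'k^'n"
  shows "trace (transpose Y ** X) = (\<Sum>i\<in>UNIV. \<Sum>j\<in>UNIV. X$i$j * Y$i$j)"
proof -
  have "trace (transpose Y ** X) = (\<Sum>j\<in>UNIV. \<Sum>i\<in>UNIV. X$i$j * Y$i$j)"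
    unfolding trace_def matrix_matrix_mult_def transpose_def
    by (simp add: mult.commute)
  also have "\<dots> = (\<Sum>i\<in>UNIV. \<Sum>j\<in>UNIV. X$i$j * Y$i$j)"
    by (rule sum.swap)
  finally show ?thesis .
qed

lemma trace_X_tY:
  fixes X Y :: "real^'k^'n"
  shows "trace (X ** transpose Y) = (\<Sum>i\<in>UNIV. \<Sum>j\<in>UNIV. X$i$j * Y$i$j)"
  unfolding trace_def matrix_matrix_mult_def transpose_def
  by simp

lemma row_ineq:
  fixes v u :: "'a \<Rightarrow> real"
  assumes fin: "finite K" and vp: "\<And>a. a \<in> K \<Longrightarrow> v a > 0"
    and sym: "\<And>a b. A a b = A b a" and nn: "\<And>a b. A a b \<ge> 0"
  shows "(\<Sum>j\<in>K. (\<Sum>a\<in>K. u a * A a j) * u j)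
         \<le> (\<Sum>j\<in>K. (\<Sum>a\<in>K. v a * A a j) * (u j)^2 / v j)"
proof -
  define D where "D = (\<Sum>a\<in>K. \<Sum>j\<in>K. A a j * (v a * (u j)^2 / v j - u a * u j))"
  have L: "(\<Sum>j\<in>K. (\<Sum>a\<in>K. v a * A a j) * (u j)^2 / v j) = (\<Sum>a\<in>K. \<Sum>j\<in>K. A a j * (v a * (u j)^2 / v j))"
    unfolding sum_distrib_right sum_divide_distrib
    by (subst sum.swap) (simp add: mult_ac)
  have R: "(\<Sum>j\<in>K. (\<Sum>a\<in>K. u a * A a j) * u j) = (\<Sum>a\<in>K. \<Sum>j\<in>K. A a j * (u a * u j))"
    unfolding sum_distrib_right
    by (subst sum.swap) (simp add: mult_ac)
  have eqD: "(\<Sum>j\<in>K. (\<Sum>a\<in>K. v a * A a j) * (u j)^2 / v j)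
       - (\<Sum>j\<in>K. (\<Sum>a\<in>K. u a * A a j) * u j) = D"
    unfolding L R D_def sum_subtractf[symmetric] right_diff_distrib ..
  have D2: "D = (\<Sum>a\<in>K. \<Sum>j\<in>K. A a j * (v j * (u a)^2 / v a - u a * u j))"
    unfolding D_def
    by (subst sum.swap) (simp add: sym mult_ac)
  have "2 * D = D + D" by simp
  also have "\<dots> = (\<Sum>a\<in>K. \<Sum>j\<in>K. A a j * (v a * (u j)^2 / v j + v j * (u a)^2 / v a - 2 * u a * u j))"
    unfolding D_def[of] 
    apply (subst (2) D2[unfolded D_def])
    unfolding sum.distrib[symmetric]
    by (intro sum.cong refl) (simp add: algebra_simps)
  also have "\<dots> \<ge> 0"
  proof (intro sum_nonneg mult_nonneg_nonneg nn)
    fix a j assume a: "a \<in> K" and j: "j \<in> K"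
    have va: "v a > 0" and vj: "v j > 0" using vp a j by auto
    have "v a * (u j)^2 / v j + v j * (u a)^2 / v a - 2 * u a * u j
       = (v a * u j - v j * u a)^2 / (v a * v j)"
      using va vj by (simp add: field_simps power2_eq_square)
    also have "\<dots> \<ge> 0" using va vj by simp
    finally show "0 \<le> v a * (u j)^2 / v j + v j * (u a)^2 / v a - 2 * u a * u j" .
  qed
  finally have "D \<ge> 0" by simp
  with eqD show ?thesis by simp
qed

lemma main_ineq:
  fixes T :: "real^'n^'n" and S \<Lambda> :: "real^'k^'k" and U U' :: "real^'k^'n"
  assumes lam: "transpose \<Lambda> = \<Lambda>"
    and U'p: "pos_mat U'"
    and Ann: "nonneg_mat (pos_part_mat (Pm S U) + \<Lambda>)"
  shows "Fobj T S \<Lambda> U \<le> Zaux T S \<Lambda> U U'"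
    and "U' = U \<Longrightarrow> Zaux T S \<Lambda> U U' = Fobj T S \<Lambda> U"
proof -
  define Q where "Q = Qm T S U"
  define P where "P = Pm S U"
  define A where "A = pos_part_mat P + \<Lambda>"
  define quad where "quad X = (\<Sum>i\<in>UNIV. \<Sum>j\<in>UNIV. (U ** X)$i$j * U$i$j)" for X :: "real^'k^'k"
  define R where "R = (\<Sum>i\<in>UNIV. \<Sum>j\<in>UNIV. (U' ** A)$i$j * (U$i$j)^2 / U'$i$j)"
  define W where "W = (\<Sum>i\<in>UNIV. \<Sum>j\<in>UNIV. 2 * (neg_part_mat Q)$i$j * ((U$i$j)^2 + (U'$i$j)^2) / (2 * U'$i$j))"
  have quad_tr: "trace (U ** X ** transpose U) = quad X" for X
    unfolding quad_def by (rule trace_X_tY)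
  have Psym: "P$a$b = P$b$a" for a b
  proof -
    have "transpose P = P" unfolding P_def Pm_def
      by (simp add: matrix_transpose_mul matrix_mul_assoc)
    then have "transpose P $ a $ b = P $ a $ b" by simp
    then show ?thesis by (simp add: transpose_def)
  qed
  have Lsym: "\<Lambda>$a$b = \<Lambda>$b$a" for a b
  proof -
    have "transpose \<Lambda> $ a $ b = \<Lambda> $ a $ b" using lam by simp
    then show ?thesis by (simp add: transpose_def)
  qed
  have Asym: "A$a$b = A$b$a" for a b
    unfolding A_def pos_part_mat_def using Psym Lsym by simp
  have Ann': "A$a$b \<ge> 0" for a b
    using Ann unfolding A_def P_def nonneg_mat_def by simp
  have Pdec: "pos_part_mat P = P + neg_part_mat P"
    unfolding pos_part_mat_def neg_part_mat_def by (simp add: vec_eq_iff max_def)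
  have quadA: "quad A = quad P + quad (neg_part_mat P) + quad \<Lambda>"
    unfolding quad_def A_def Pdec
    by (simp add: matrix_add_ldistrib sum.distrib[symmetric] algebra_simps)
  have F_eq: "Fobj T S \<Lambda> U = (\<Sum>i\<in>UNIV. \<Sum>j\<in>UNIV. -2 * (Q$i$j * U$i$j)) + quad A - quad (neg_part_mat P)"
  proof -
    have t1: "trace (transpose U ** transpose T ** U ** S) = (\<Sum>i\<in>UNIV. \<Sum>j\<in>UNIV. Q$i$j * U$i$j)"
    proof -
      have "transpose U ** transpose T ** U ** S = transpose U ** Q"
        unfolding Q_def Qm_def by (simp add: matrix_mul_assoc)
      then show ?thesis by (simp add: trace_tY_X)
    qed
    have t2: "U ** transpose S ** transpose U ** U ** S ** transpose U = U ** P ** transpose U"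
      unfolding P_def Pm_def by (simp add: matrix_mul_assoc)
    show ?thesis unfolding Fobj_def t1 t2 quad_tr quadA
      by (simp add: sum_distrib_left)
  qed
  have Z_eq: "Zaux T S \<Lambda> U U' = (\<Sum>i\<in>UNIV. \<Sum>j\<in>UNIV. -2 * ((pos_part_mat Q)$i$j * U$i$j)) - quad (neg_part_mat P) + R + W"
  proof -
    have "trace (pos_part_mat Q ** transpose U) = (\<Sum>i\<in>UNIV. \<Sum>j\<in>UNIV. (pos_part_mat Q)$i$j * U$i$j)"
      by (rule trace_X_tY)
    then show ?thesis
      unfolding Zaux_def Let_def quad_tr R_def W_def A_def[symmetric] Q_def[symmetric] P_def[symmetric]
      by (simp add: sum.distrib sum_distrib_left)
  qed
  have QU: "-2 * (Q$i$j * U$i$j) = -2 * ((pos_part_mat Q)$i$j * U$i$j) + 2 * (neg_part_mat Q)$i$j * U$i$j" for i j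
    unfolding pos_part_mat_def neg_part_mat_def by (simp add: max_def algebra_simps)
  have rowR: "quad A \<le> R"
    unfolding quad_def R_def
  proof (rule sum_mono)
    fix i
    show "(\<Sum>j\<in>UNIV. (U ** A)$i$j * U$i$j) \<le> (\<Sum>j\<in>UNIV. (U' ** A)$i$j * (U$i$j)^2 / U'$i$j)"
      unfolding matrix_matrix_mult_def
      using row_ineq[of UNIV "\<lambda>j. U'$i$j" "\<lambda>a b. A$a$b" "\<lambda>j. U$i$j"] U'p Asym Ann'
      by (simp add: pos_mat_def)
  qed
  have Wge: "(\<Sum>i\<in>UNIV. \<Sum>j\<in>UNIV. 2 * (neg_part_mat Q)$i$j * U$i$j) \<le> W"
    unfolding W_def
  proof (intro sum_mono)
    fix i j
    have nn: "(neg_part_mat Q)$i$j \<ge> 0" unfolding neg_part_mat_def by simp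
    have up: "U'$i$j > 0" using U'p by (simp add: pos_mat_def)
    have "U$i$j \<le> ((U$i$j)^2 + (U'$i$j)^2) / (2 * U'$i$j)"
    proof -
      have "2 * U'$i$j * U$i$j \<le> (U$i$j)^2 + (U'$i$j)^2"
        using sum_squares_bound[of "U$i$j" "U'$i$j"] by (simp add: power2_eq_square algebra_simps)
      then show ?thesis using up by (simp add: field_simps)
    qed
    then have "(neg_part_mat Q)$i$j * U$i$j \<le> (neg_part_mat Q)$i$j * (((U$i$j)^2 + (U'$i$j)^2) / (2 * U'$i$j))"
      using nn by (rule mult_left_mono)
    then show "2 * (neg_part_mat Q)$i$j * U$i$j \<le> 2 * (neg_part_mat Q)$i$j * ((U$i$j)^2 + (U'$i$j)^2) / (2 * U'$i$j)"
      by simp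
  qed
  have Fsplit: "Fobj T S \<Lambda> U = (\<Sum>i\<in>UNIV. \<Sum>j\<in>UNIV. -2 * ((pos_part_mat Q)$i$j * U$i$j))
     + (\<Sum>i\<in>UNIV. \<Sum>j\<in>UNIV. 2 * (neg_part_mat Q)$i$j * U$i$j) + quad A - quad (neg_part_mat P)"
    unfolding F_eq QU sum.distrib by simp
  show "Fobj T S \<Lambda> U \<le> Zaux T S \<Lambda> U U'"
    unfolding Fsplit Z_eq using rowR Wge by linarith
  assume e: "U' = U"
  have up: "U$i$j > 0" for i j using U'p e by (simp add: pos_mat_def)
  have "R = quad A" unfolding R_def quad_def e
    using up by (intro sum.cong refl) (simp add: power2_eq_square)
  moreover have "W = (\<Sum>i\<in>UNIV. \<Sum>j\<in>UNIV. 2 * (neg_part_mat Q)$i$j * U$i$j)"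
    unfolding W_def e
    using up by (intro sum.cong refl) (simp add: power2_eq_square field_simps)
  ultimately show "Zaux T S \<Lambda> U U' = Fobj T S \<Lambda> U"
    unfolding Fsplit Z_eq by simp
qed

theorem lemma3:
  fixes T :: "real^'n^'n" and S \<Lambda> :: "real^'k^'k"
  assumes "transpose T = - T" and "transpose S = - S" and "transpose \<Lambda> = \<Lambda>"
  shows "(\<forall>U U'. nonneg_mat U \<longrightarrow> pos_mat U'
            \<longrightarrow> nonneg_mat (pos_part_mat (Pm S U) + \<Lambda>)
            \<longrightarrow> Zaux T S \<Lambda> U U' \<ge> Fobj T S \<Lambda> U)
       \<and> (\<forall>U. pos_mat U \<longrightarrow> nonneg_mat (pos_part_mat (Pm S U) + \<Lambda>)
            \<longrightarrow> Zaux T S \<Lambda> U U = Fobj T S \<Lambda> U)"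
proof (intro conjI allI impI)
  fix U U' :: "real^'k^'n"
  assume "pos_mat U'" "nonneg_mat (pos_part_mat (Pm S U) + \<Lambda>)"
  then show "Fobj T S \<Lambda> U \<le> Zaux T S \<Lambda> U U'"
    by (rule main_ineq(1)[OF assms(3)])
next
  fix U :: "real^'k^'n"
  assume "pos_mat U" "nonneg_mat (pos_part_mat (Pm S U) + \<Lambda>)"
  then show "Zaux T S \<Lambda> U U = Fobj T S \<Lambda> U"
    using main_ineq(2)[OF assms(3)] by blast
qed

end
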